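(* Let $p\ge 2$ and $n\ge 1$ be integers. If there exists a $p$-gadget on $n$ vertices, then there exists a $p$-solvable oriented graph on $n\binom{p}{2}+p$ vertices.
   Context: A directed graph $D=(V,E)$ has arcs $E \subseteq \{(u,v)\in V^2 : u \neq v\}$; it is an oriented graph if it never contains both $(u,v)$ and $(v,u)$. $N^-(v)=\{u:(u,v)\in E\}$. For $q\ge2$ let $[q]=\{0,\dots,q-1\}$. A $D$-function over $[q]$ is a map $f=(f_v)_{v\in V}:[q]^V\to[q]^V$ with each $f_v(x)$ depending only on $(x_u)_{u\in N^-(v)}$. $D$ is $q$-solvable if some $D$-function $f$ over $[q]$ has the property that for every $x\in[q]^V$ there is $v$ with $f_v(x)=x_v$. A $q$-gadget is an oriented graph $D$ with vertices labelled $1,\dots,n$ which is not $q$-solvable, but for which there exist a $D$-function $f$ over $[q]$ and a function $\phi:[q]^{n-1}\to[q]$ such that every $x\in[q]^n$ with $f_v(x)\ne x_v$ for all $v$ satisfies $x_1=\phi(x_2,\dots,x_n)$. *)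

theory Defs
  imports Main "HOL-Library.FuncSet"
begin

text \<open>A digraph on n vertices has vertex set {0..<n} (nat) and arc set E.
  Vertex label i (1..n) of the paper corresponds to vertex i-1 here.\<close>

definition oriented_graph :: "nat \<Rightarrow> (nat \<times> nat) set \<Rightarrow> bool" where
  "oriented_graph n E \<longleftrightarrow> E \<subseteq> {0..<n} \<times> {0..<n}
     \<and> (\<forall>u v. (u, v) \<in> E \<longrightarrow> u \<noteq> v)
     \<and> (\<forall>u v. (u, v) \<in> E \<longrightarrow> (v, u) \<notin> E)"

definition in_nbrs :: "(nat \<times> nat) set \<Rightarrow> nat \<Rightarrow> nat set" where
  "in_nbrs E v = {u. (u, v) \<in> E}"

definition configs :: "nat \<Rightarrow> nat \<Rightarrow> (nat \<Rightarrow> nat) set" where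
  "configs q n = {0..<n} \<rightarrow>\<^sub>E {0..<q}"

definition D_function :: "nat \<Rightarrow> nat \<Rightarrow> (nat \<times> nat) set \<Rightarrow> ((nat \<Rightarrow> nat) \<Rightarrow> nat \<Rightarrow> nat) \<Rightarrow> bool" where
  "D_function q n E f \<longleftrightarrow>
     (\<forall>x \<in> configs q n. \<forall>v < n. f x v < q)
     \<and> (\<forall>v < n. \<forall>x \<in> configs q n. \<forall>y \<in> configs q n.
          (\<forall>u \<in> in_nbrs E v. x u = y u) \<longrightarrow> f x v = f y v)"

definition solvable :: "nat \<Rightarrow> nat \<Rightarrow> (nat \<times> nat) set \<Rightarrow> bool" where
  "solvable q n E \<longleftrightarrow>
     (\<exists>f. D_function q n E f \<and> (\<forall>x \<in> configs q n. \<exists>v < n. f x v = x v))"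

text \<open>q-gadget: vertex 1 of the paper is vertex 0 here; phi takes (x_2,...,x_n),
  i.e. the restriction of x to {1..<n}.\<close>
definition gadget :: "nat \<Rightarrow> nat \<Rightarrow> (nat \<times> nat) set \<Rightarrow> bool" where
  "gadget q n E \<longleftrightarrow> oriented_graph n E \<and> \<not> solvable q n E
     \<and> (\<exists>f phi. D_function q n E f
          \<and> phi \<in> ({1..<n} \<rightarrow>\<^sub>E {0..<q}) \<rightarrow> {0..<q}
          \<and> (\<forall>x \<in> configs q n. (\<forall>v < n. f x v \<noteq> x v)
                 \<longrightarrow> x 0 = phi (restrict x {1..<n})))"

end

theory Submission
  imports Defs
begin

definition bigE :: "nat \<Rightarrow> nat \<Rightarrow> (nat \<times> nat) set \<Rightarrow> (nat \<times> nat) set" where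
"bigE p n E = {(i,j). i<j \<and> j<p}
 \<union> {(t+1, p+t*n+k) | t k. t+1<p \<and> k<n}
 \<union> {(p+t*n+k, i) | t k i. t+1<p \<and> k<n \<and> i \<le> t}
 \<union> {(p+t*n+a, p+t*n+c) | t a c. t+1<p \<and> (a,c)\<in>E}"

definition gy :: "nat \<Rightarrow> nat \<Rightarrow> (nat\<Rightarrow>nat) \<Rightarrow> nat \<Rightarrow> (nat\<Rightarrow>nat)" where
"gy p n x t = restrict (\<lambda>a. if a=0 then (x(p+t*n) + p - x(t+1)) mod p else x(p+t*n+a)) {0..<n}"

definition gval :: "nat \<Rightarrow> nat \<Rightarrow> (((nat\<Rightarrow>nat) \<Rightarrow> nat)) \<Rightarrow> (nat\<Rightarrow>nat) \<Rightarrow> nat \<Rightarrow> nat" where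
"gval p n phi x t = (x(p+t*n) + p - phi (restrict (\<lambda>a. x(p+t*n+a)) {1..<n})) mod p"

definition wval :: "nat \<Rightarrow> nat \<Rightarrow> (((nat\<Rightarrow>nat) \<Rightarrow> nat)) \<Rightarrow> (nat\<Rightarrow>nat) \<Rightarrow> nat \<Rightarrow> nat \<Rightarrow> nat" where
"wval p n phi x i j = (if j \<le> i then x j else gval p n phi x (j-1))"

definition bigF :: "nat \<Rightarrow> nat \<Rightarrow> ((nat \<Rightarrow> nat) \<Rightarrow> nat \<Rightarrow> nat) \<Rightarrow> (((nat\<Rightarrow>nat) \<Rightarrow> nat)) \<Rightarrow> (nat\<Rightarrow>nat) \<Rightarrow> nat \<Rightarrow> nat" where
"bigF p n fE phi x v =
 (if v < p then (v + (p-1) * (\<Sum>j\<in>{0..<p}-{v}. wval p n phi x v j)) mod p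
  else if v < p + (p-1)*n then
    (let t = (v-p) div n; k = (v-p) mod n in
      if k = 0 then (fE (gy p n x t) 0 + x (t+1)) mod p else fE (gy p n x t) k)
  else 0)"

lemma uniq:
  fixes n :: nat
  assumes "a<n" "c<n" "t*n+a = s*n+c"
  shows "t=s \<and> a=c"
proof -
  have n: "n > 0" using assms(1) by simp
  have 1: "(t*n+a) div n = t" "(t*n+a) mod n = a" using assms(1) n by simp_all
  have 2: "(s*n+c) div n = s" "(s*n+c) mod n = c" using assms(2) n by simp_all
  show ?thesis using 1 2 assms(3) by metis
qed

lemma gadget_lt:
  fixes n :: nat
  assumes "t+1<p" "k<n"
  shows "t*n+k < (p-1)*n"
proof -
  have "t*n+k < (t+1)*n" using assms by simp
  also have "\<dots> \<le> (p-1)*n" using assms by (intro mult_right_mono) auto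
  finally show ?thesis .
qed

lemma decomp:
  fixes n :: nat
  assumes "p \<le> v" "v < p+(p-1)*n"
  shows "\<exists>t k. t+1<p \<and> k<n \<and> v = p+t*n+k"
proof -
  have n: "n > 0" using assms by (cases n) auto
  define t where "t = (v-p) div n"
  define k where "k = (v-p) mod n"
  have "v - p < (p-1)*n" using assms by simp
  hence "t < p - 1" unfolding t_def by (simp add: less_mult_imp_div_less)
  moreover have "k<n" using n unfolding k_def by simp
  moreover have "v = p+t*n+k" unfolding t_def k_def using assms by simp
  ultimately show ?thesis by (intro exI[of _ t] exI[of _ k]) auto
qed

lemma bigF_gadget:
  fixes n :: nat
  assumes "t+1<p" "k<n"
  shows "bigF p n fE phi x (p+t*n+k) =
     (if k = 0 then (fE (gy p n x t) 0 + x (t+1)) mod p else fE (gy p n x t) k)"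
proof -
  have "t*n+k < (p-1)*n" by (rule gadget_lt[OF assms])
  moreover have "(t*n+k) div n = t" "(t*n+k) mod n = k" using assms by auto
  moreover have "n > 0" using assms by auto
  moreover have "\<not> p+t*n+k < p" using assms by (cases "t*n+k") auto
  ultimately show ?thesis unfolding bigF_def Let_def by simp
qed


lemma arcs:
  assumes "(u,v) \<in> bigE p n E"
  shows "(u<v \<and> v<p) \<or> (\<exists>t k. t+1<p \<and> k<n \<and> u=t+1 \<and> v = p+t*n+k)
    \<or> (\<exists>t k. t+1<p \<and> k<n \<and> u=p+t*n+k \<and> v \<le> t)
    \<or> (\<exists>t a c. t+1<p \<and> (a,c)\<in>E \<and> u=p+t*n+a \<and> v=p+t*n+c)"
  using assms unfolding bigE_def by blast

lemma un: "a<n \<Longrightarrow> c<n \<Longrightarrow> p+t*n+a = p+s*n+(c::nat) \<Longrightarrow> t=s \<and> a=c"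
  using uniq by (metis add.assoc add_left_cancel)

lemma anti:
  assumes og: "oriented_graph n E" and a: "(u,v) \<in> bigE p n E" "(v,u) \<in> bigE p n E"
  shows False
proof -
  have En: "(a,c) \<in> E \<Longrightarrow> a<n \<and> c<n" for a c using og unfolding oriented_graph_def by auto
  have Eanti: "(a,c) \<in> E \<Longrightarrow> (c,a) \<notin> E" for a c using og unfolding oriented_graph_def by auto
  have h1: "ka<n \<Longrightarrow> k<n \<Longrightarrow> ta*n+ka = t*n+k \<Longrightarrow> Suc t \<le> ta \<Longrightarrow> False" for ka k ta t
    using uniq[of ka n k ta t] by simp
  have h2: "(a,c)\<in>E \<Longrightarrow> (aa,ca)\<in>E \<Longrightarrow> ta*n+ca = t*n+a \<Longrightarrow> ta*n+aa = t*n+c \<Longrightarrow> False"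
    for a c aa ca t ta
    using uniq[of ca n a ta t] uniq[of aa n c ta t] En[of a c] En[of aa ca] Eanti[of a c] by auto
  from arcs[OF a(1)] arcs[OF a(2)] show False
  proof (elim disjE exE conjE)
  qed (simp_all, (metis uniq En Eanti Suc_n_not_le_n)?, (metis h1 h2)+)
qed


lemma conf_lt: "x \<in> configs q m \<Longrightarrow> v < m \<Longrightarrow> x v < q"
  unfolding configs_def by auto

lemma gy_config:
  fixes n :: nat
  assumes x: "x \<in> configs p N" and N: "p+(p-1)*n \<le> N" and t: "t+1<p"
  shows "gy p n x t \<in> configs p n"
proof -
  have p: "p > 0" using t by simp
  have "a < n \<Longrightarrow> p+t*n+a < N" for a using gadget_lt[of t p a n] t N by auto
  hence "a < n \<Longrightarrow> x(p+t*n+a) < p" for a using conf_lt[OF x] by auto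
  then show ?thesis unfolding configs_def gy_def using p by auto
qed

lemma modlem: "(B::nat) < p \<Longrightarrow> J < p \<Longrightarrow> (B + p - ((B+p-J) mod p)) mod p = J"
proof (cases "J \<le> B")
  case True
  assume a: "B<p" "J<p"
  have "(B+p-J) mod p = B - J" using True a
  proof -
    have "B+p-J = (B-J)+p" using True by simp
    hence "(B+p-J) mod p = ((B-J)+p) mod p" by (simp only:)
    also have "\<dots> = (B-J) mod p" by (rule mod_add_self2)
    also have "\<dots> = B - J" using a by (intro mod_less) linarith
    finally show ?thesis .
  qed
  hence "B + p - ((B+p-J) mod p) = p + J" using True by simp
  thus ?thesis using a by simp
next
  case False
  assume a: "B<p" "J<p"
  have "(B+p-J) mod p = B+p-J" using False a by simp
  hence "B + p - ((B+p-J) mod p) = J" using False a by simp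
  thus ?thesis using a by simp
qed

lemma gval_correct:
  fixes n :: nat
  assumes x: "x \<in> configs p N" and N: "p+(p-1)*n \<le> N" and t: "t+1<p"
    and Df: "D_function p n E fE"
    and H: "\<forall>y\<in>configs p n. (\<forall>v<n. fE y v \<noteq> y v) \<longrightarrow> y 0 = phi (restrict y {1..<n})"
    and n0: "n > 0" and nf: "\<forall>v<N. bigF p n fE phi x v \<noteq> x v"
  shows "gval p n phi x t = x (t+1)"
proof -
  define y where "y = gy p n x t"
  have yc: "y \<in> configs p n" unfolding y_def by (rule gy_config[OF x N t])
  have vN: "k<n \<Longrightarrow> p+t*n+k < N" for k using gadget_lt[of t p k n] t N by auto
  have xb: "x (p+t*n) < p" using conf_lt[OF x vN[OF n0]] by simp
  have xj: "x (t+1) < p" using conf_lt[OF x, of "t+1"] t N by simp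
  have y0: "y 0 = (x(p+t*n) + p - x(t+1)) mod p" unfolding y_def gy_def using n0 by simp
  have nfy: "\<forall>k<n. fE y k \<noteq> y k"
  proof (intro allI impI)
    fix k assume k: "k<n"
    have ne: "bigF p n fE phi x (p+t*n+k) \<noteq> x (p+t*n+k)" using nf vN[OF k] by blast
    show "fE y k \<noteq> y k"
    proof (cases "k=0")
      case True
      show ?thesis
      proof
        assume e: "fE y k = y k"
        have "bigF p n fE phi x (p+t*n+k) = (y 0 + x(t+1)) mod p"
          using bigF_gadget[OF t k] e True unfolding y_def by simp
        also have "\<dots> = x (p+t*n)"
        proof -
          have "((x(p+t*n) + p - x(t+1)) mod p + x(t+1)) mod p = (x(p+t*n) + p - x(t+1) + x(t+1)) mod p"
            by (rule mod_add_left_eq)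
          also have "x(p+t*n) + p - x(t+1) + x(t+1) = x(p+t*n) + p" using xj by simp
          finally show ?thesis using xb y0 by simp
        qed
        finally show False using ne True by simp
      qed
    next
      case False
      have "y k = x (p+t*n+k)" unfolding y_def gy_def using False k by simp
      thus ?thesis using ne bigF_gadget[OF t k] False unfolding y_def by simp
    qed
  qed
  have "y 0 = phi (restrict y {1..<n})" using H yc nfy by blast
  moreover have "restrict y {1..<n} = restrict (\<lambda>a. x(p+t*n+a)) {1..<n}"
    unfolding y_def gy_def by (auto simp: restrict_def)
  ultimately have "phi (restrict (\<lambda>a. x(p+t*n+a)) {1..<n}) = (x(p+t*n) + p - x(t+1)) mod p"
    using y0 by simp
  thus ?thesis unfolding gval_def using modlem[OF xb xj] by simp
qed


lemma has_fixed:
  fixes n :: nat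
  assumes x: "x \<in> configs p N" and N: "p+(p-1)*n \<le> N" and p2: "p \<ge> 2"
    and Df: "D_function p n E fE"
    and H: "\<forall>y\<in>configs p n. (\<forall>v<n. fE y v \<noteq> y v) \<longrightarrow> y 0 = phi (restrict y {1..<n})"
    and n0: "n > 0"
  shows "\<exists>v<N. bigF p n fE phi x v = x v"
proof (rule ccontr)
  assume "\<not> ?thesis"
  hence nf: "\<forall>v<N. bigF p n fE phi x v \<noteq> x v" by blast
  have wv: "wval p n phi x i j = x j" if "j<p" for i j
  proof (cases "j \<le> i")
    case True thus ?thesis unfolding wval_def by simp
  next
    case False
    hence "j-1+1 = j" by simp
    thus ?thesis unfolding wval_def using False gval_correct[OF x N _ Df H n0 nf, of "j-1"] that by simp
  qed
  define S where "S = (\<Sum>j\<in>{0..<p}. x j)"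
  define i where "i = S mod p"
  have ip: "i < p" unfolding i_def using p2 by simp
  have iN: "i < N" using ip N by simp
  define R where "R = (\<Sum>j\<in>{0..<p}-{i}. x j)"
  have SR: "S = x i + R" unfolding S_def R_def using ip by (simp add: sum.remove)
  have sw: "(\<Sum>j\<in>{0..<p}-{i}. wval p n phi x i j) = R"
    unfolding R_def by (rule sum.cong) (auto intro: wv)
  have "bigF p n fE phi x i = (i + (p-1) * R) mod p"
    unfolding bigF_def using ip sw by simp
  also have "\<dots> = (S + (p-1)*R) mod p" unfolding i_def by (rule mod_add_left_eq)
  also have "S + (p-1)*R = x i + p*R"
  proof -
    have "R + (p-1)*R = p*R" using p2 by (cases p) auto
    thus ?thesis unfolding SR by simp
  qed
  also have "(x i + p*R) mod p = x i" using conf_lt[OF x iN] by simp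
  finally show False using nf iN by blast
qed



lemma in_nbrsI: "(u,v) \<in> E \<Longrightarrow> u \<in> in_nbrs E v" unfolding in_nbrs_def by simp

lemma Dfun_big:
  fixes n :: nat
  assumes N: "p+(p-1)*n \<le> N" and p2: "p \<ge> 2" and Df: "D_function p n E fE" and n0: "n > 0"
    and og: "oriented_graph n E"
  shows "D_function p N (bigE p n E) (bigF p n fE phi)"
  unfolding D_function_def
proof (intro conjI ballI allI impI)
  have p0: "p > 0" using p2 by simp
  have Dr: "y \<in> configs p n \<Longrightarrow> k < n \<Longrightarrow> fE y k < p" for y k using Df unfolding D_function_def by blast
  have Dl: "k < n \<Longrightarrow> y \<in> configs p n \<Longrightarrow> y' \<in> configs p n \<Longrightarrow> (\<forall>u\<in>in_nbrs E k. y u = y' u) \<Longrightarrow> fE y k = fE y' k"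
    for y y' k using Df unfolding D_function_def by blast
  have En: "(a,c) \<in> E \<Longrightarrow> a<n \<and> c<n" for a c using og unfolding oriented_graph_def by auto
  {
    fix x v assume x: "x \<in> configs p N" and v: "v < N"
    show "bigF p n fE phi x v < p"
    proof (cases "v < p")
      case True thus ?thesis unfolding bigF_def using p0 by simp
    next
      case False
      show ?thesis
      proof (cases "v < p+(p-1)*n")
        case True
        then obtain t k where tk: "t+1<p" "k<n" "v = p+t*n+k" using decomp[of p v n] False by auto
        show ?thesis using bigF_gadget[OF tk(1,2)] Dr[OF gy_config[OF x N tk(1)] tk(2)] p0 tk(3) by simp
      next
        case False2: False
        thus ?thesis unfolding bigF_def using False p0 by simp
      qed
    qed
  }
  {
    fix v x y assume v: "v < N" and x: "x \<in> configs p N" and y: "y \<in> configs p N"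
      and ag: "\<forall>u\<in>in_nbrs (bigE p n E) v. x u = y u"
    have arc: "(u,v) \<in> bigE p n E \<Longrightarrow> x u = y u" for u using ag in_nbrsI by blast
    show "bigF p n fE phi x v = bigF p n fE phi y v"
    proof (cases "v < p")
      case True
      have "wval p n phi x v j = wval p n phi y v j" if j: "j \<in> {0..<p}-{v}" for j
      proof (cases "j \<le> v")
        case True
        hence "(j,v) \<in> bigE p n E" using j \<open>v<p\<close> unfolding bigE_def by auto
        thus ?thesis using True unfolding wval_def by (simp add: arc)
      next
        case False
        define t where "t = j - 1"
        have t: "t+1 < p" "v \<le> t" using j False unfolding t_def by auto
        have xa: "a < n \<Longrightarrow> x(p+t*n+a) = y(p+t*n+a)" for a
        proof -
          assume "a<n"
          hence "(p+t*n+a, v) \<in> bigE p n E" using t unfolding bigE_def by blast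
          thus ?thesis by (rule arc)
        qed
        have "gval p n phi x t = gval p n phi y t"
        proof -
          have "restrict (\<lambda>a. x(p+t*n+a)) {1..<n} = restrict (\<lambda>a. y(p+t*n+a)) {1..<n}"
            using xa by (auto simp: restrict_def)
          moreover have "x(p+t*n) = y(p+t*n)" using xa[OF n0] by simp
          ultimately show ?thesis unfolding gval_def by simp
        qed
        thus ?thesis using False unfolding wval_def t_def by simp
      qed
      hence "(\<Sum>j\<in>{0..<p}-{v}. wval p n phi x v j) = (\<Sum>j\<in>{0..<p}-{v}. wval p n phi y v j)"
        by (rule sum.cong[OF refl])
      thus ?thesis unfolding bigF_def using True by simp
    next
      case False
      show ?thesis
      proof (cases "v < p+(p-1)*n")
        case True
        then obtain t k where tk: "t+1<p" "k<n" "v = p+t*n+k" using decomp[of p v n] False by auto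
        have xj: "x(t+1) = y(t+1)" using arc[of "t+1"] tk unfolding bigE_def by blast
        have ag2: "\<forall>u\<in>in_nbrs E k. gy p n x t u = gy p n y t u"
        proof
          fix u assume "u \<in> in_nbrs E k"
          hence uk: "(u,k) \<in> E" unfolding in_nbrs_def by simp
          hence un: "u < n" using En by blast
          have "(p+t*n+u, p+t*n+k) \<in> bigE p n E" using uk tk unfolding bigE_def by blast
          hence "x(p+t*n+u) = y(p+t*n+u)" using tk arc by simp
          thus "gy p n x t u = gy p n y t u" unfolding gy_def using un xj by auto
        qed
        have "fE (gy p n x t) k = fE (gy p n y t) k"
          by (rule Dl[OF tk(2) gy_config[OF x N tk(1)] gy_config[OF y N tk(1)] ag2])
        thus ?thesis using bigF_gadget[OF tk(1,2)] tk(3) xj by (cases "k=0") simp_all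
      next
        case False2: False
        thus ?thesis unfolding bigF_def using False by simp
      qed
    qed
  }
qed



lemma bigE_oriented:
  fixes n :: nat
  assumes og: "oriented_graph n E" and N: "p+(p-1)*n \<le> N"
  shows "oriented_graph N (bigE p n E)"
proof -
  have En: "(a,c) \<in> E \<Longrightarrow> a<n \<and> c<n" for a c using og unfolding oriented_graph_def by auto
  have Eirr: "(a,c) \<in> E \<Longrightarrow> a \<noteq> c" for a c using og unfolding oriented_graph_def by auto
  have gv: "t+1<p \<Longrightarrow> k<n \<Longrightarrow> p+t*n+k < N" for t k
    using gadget_lt[of t p k n] N by linarith
  have sub: "(u,v) \<in> bigE p n E \<Longrightarrow> u < N \<and> v < N" for u v
  proof -
    assume "(u,v) \<in> bigE p n E"
    from arcs[OF this] show ?thesis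
    proof (elim disjE exE conjE)
    qed (use gv En N in \<open>fastforce+\<close>)
  qed
  have irr: "(u,v) \<in> bigE p n E \<Longrightarrow> u \<noteq> v" for u v
  proof -
    assume "(u,v) \<in> bigE p n E"
    from arcs[OF this] show ?thesis
    proof (elim disjE exE conjE)
    qed (use Eirr in auto)
  qed
  have s2: "bigE p n E \<subseteq> {0..<N} \<times> {0..<N}" using sub by fastforce
  show ?thesis unfolding oriented_graph_def using s2 irr anti[OF og] by blast
qed

theorem lemma8:
  fixes p n :: nat
  assumes "p \<ge> 2" and "n \<ge> 1"
    and "\<exists>E. gadget p n E"
  shows "\<exists>E'. oriented_graph (n * (p choose 2) + p) E'
              \<and> solvable p (n * (p choose 2) + p) E'"
proof -
  obtain E where g: "gadget p n E" using assms(3) by blast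
  then obtain fE phi where og: "oriented_graph n E" and Df: "D_function p n E fE"
    and H: "\<forall>y\<in>configs p n. (\<forall>v<n. fE y v \<noteq> y v) \<longrightarrow> y 0 = phi (restrict y {1..<n})"
    unfolding gadget_def by blast
  define N where "N = n * (p choose 2) + p"
  have "p - 1 \<le> p choose 2"
  proof -
    have "2*(p-1) \<le> p*(p-1)" using assms(1) by (intro mult_right_mono) auto
    thus ?thesis unfolding choose_two by linarith
  qed
  hence "(p-1)*n \<le> n*(p choose 2)" by (simp add: mult.commute mult_right_mono)
  hence Nb: "p+(p-1)*n \<le> N" unfolding N_def by simp
  have n0: "n > 0" using assms(2) by simp
  have "oriented_graph N (bigE p n E)" by (rule bigE_oriented[OF og Nb])
  moreover have "solvable p N (bigE p n E)"
    unfolding solvable_def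
    using Dfun_big[OF Nb assms(1) Df n0 og, of phi] has_fixed[OF _ Nb assms(1) Df H n0] by blast
  ultimately show ?thesis unfolding N_def by blast
qed

end
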